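(* Consider the event-triggered closed-loop system described in the context, with $\hat\tau$ and $\psi$ defined there, and let $a=\lambda_1^p\psi(\hat\tau,\lambda_2)$, $b=\lambda_3^p\psi(\hat\tau,\lambda_2)$. Then for every $k$, $$\int_{t_k}^{\hat t_k}\|\varepsilon(\tau)\|^p\,d\tau\le a\int_{t_k}^{\hat t_k}\|\xi(\tau)\|^p\,d\tau+b\int_{t_k}^{\hat t_k}\|d(\tau)\|^p\,d\tau.$$
   Context: Plant: $\dot\xi=f(\xi,d)+g(\xi)u$, $z=h(\xi,d)$, with state $\xi\in\mathbb{R}^n$, input $u\in\mathbb{R}^m$, disturbance $d$ a measurable signal with values in $\mathbb{R}^q$, $\int_{t_0}^\infty\|d\|^p<\infty$ and $\|d\|_\infty<\infty$, output $z\in\mathbb{R}^s$; $f,g,h$ locally Lipschitz, $f(0,0)=0$, $h(0,0)=0$. A locally Lipschitz feedback $\gamma$ is implemented with sampling times $t_0<t_1<\dots$: $u(t)=\gamma(\xi(t_k))$ and $\varepsilon(t)=\xi(t_k)-\xi(t)$ on $[t_k,t_{k+1})$, so $\dot\xi=f(\xi,d)+g(\xi)\gamma(\xi+\varepsilon)$. Let $p>1$ (exponent of the $\mathcal{L}_p$ performance), $q$ with $1/p+1/q=1$. Constants $\lambda_1,\lambda_2,\lambda_3\ge0$ (non-decreasing functions of $\|\xi_0\|,\|d\|_\infty$) satisfy, along trajectories, $\|\dot\xi\|\le\lambda_1\|\xi\|+\lambda_2\|\varepsilon\|+\lambda_3\|d\|$. Define $\psi(t,\lambda_2)=\frac{2^{2p}(p-1)^{p-1}}{\lambda_2^p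 p^p}\big(e^{\frac{\lambda_2 p}{2(p-1)}t}-1\big)^{p-1}\big(e^{\frac{\lambda_2 p}{2}t}-1\big)$. With constants $c_1,c_2,c_3,\bar c_3,\mu>0$, $\sigma<1$, $\lambda>0$ and desired gain $\mu_d>\mu$ (these arise from Lyapunov-type estimates for the system), let $B_1=c_1\sigma-(\bar c_3\lambda)^q/q$, $B_3=\lambda(\mu_d^p-\mu^p)-c_3$, $c=c_2+\lambda_2^p/p$, assumed $B_1,B_3>0$; $\tau_i=\sup\{t\ge0:\lambda_i^p\psi(t,\lambda_2)<B_i/c\}$, $i\in\{1,3\}$; $\hat\tau=\min\{\tau_1,\tau_3\}$ and $\hat t_k=t_k+\hat\tau$. The sampling times satisfy $t_{k+1}\ge\hat t_k$ or the inequality is considered on the interval where $\varepsilon(t)=\xi(t_k)-\xi(t)$ is defined. *)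

theory Defs
  imports "HOL-Analysis.Analysis"
begin

definition loc_lipschitz :: "('a::metric_space \<Rightarrow> 'b::metric_space) \<Rightarrow> bool" where
  "loc_lipschitz F \<longleftrightarrow> (\<forall>x. \<exists>e>0. \<exists>L. L-lipschitz_on (cball x e) F)"

definition psi :: "real \<Rightarrow> real \<Rightarrow> real \<Rightarrow> real" where
  "psi p l2 t =
     2 powr (2 * p) * (p - 1) powr (p - 1) / (l2 powr p * p powr p)
     * (exp (l2 * p / (2 * (p - 1)) * t) - 1) powr (p - 1)
     * (exp (l2 * p / 2 * t) - 1)"

definition tau_of :: "real \<Rightarrow> real \<Rightarrow> real \<Rightarrow> real \<Rightarrow> real \<Rightarrow> real" where
  "tau_of p l2 li Bi c = Sup {s. s \<ge> 0 \<and> li powr p * psi p l2 s < Bi / c}"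

end

theory Submission
  imports Defs
begin

lemma integral_AE_eq:
  assumes "AE x in lborel. f x = g x"
  shows "integral S f = integral S (g :: 'a::euclidean_space \<Rightarrow> real)"
proof -
  have "\<And>I. (f has_integral I) S = (g has_integral I) S"
    by (rule has_integral_AE) (use assms in \<open>auto elim: AE_mp\<close>)
  then show ?thesis unfolding integral_def integrable_on_def by simp
qed

lemma bm_int:
  fixes f :: "real \<Rightarrow> real"
  assumes "f \<in> borel_measurable lebesgue" "\<And>x. x \<in> {a..b} \<Longrightarrow> \<bar>f x\<bar> \<le> M"
  shows "f integrable_on {a..b}"
proof (rule measurable_bounded_by_integrable_imp_integrable_real[where g="\<lambda>_. M"])
  show "f \<in> borel_measurable (lebesgue_on {a..b})"
    using assms(1) by (simp add: measurable_restrict_space1)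
qed (use assms in auto)


lemma tonelli_ident:
  fixes w :: "real \<Rightarrow> real"
  assumes wb: "w \<in> borel_measurable borel" and w0: "\<And>x. 0 \<le> w x" and wM: "\<And>x. w x \<le> M"
    and lam: "l > 0" and as: "a \<le> s"
  shows "integral {a..s} (\<lambda>u. integral {a..u} (\<lambda>r. exp (l*(u-r)) * w r))
       = integral {a..s} (\<lambda>r. w r * ((exp (l*(s-r)) - 1) / l))"
proof -
  have wlb: "w \<in> borel_measurable lborel" using wb by simp
  have wl: "w \<in> borel_measurable lebesgue"
    by (rule measurable_completion) (rule wlb)
  define V where "V u = integral {a..u} (\<lambda>r. exp (l*(u-r)) * w r)" for u
  define K where "K r = (exp (l*(s-r)) - 1) / l" for r
  define F where "F u r = (if a \<le> r \<and> r \<le> u \<and> u \<le> s then exp(l*(u-r)) * w r else 0)" for u r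
  have meas: "case_prod (\<lambda>u r. ennreal (F u r)) \<in> borel_measurable (lborel \<Otimes>\<^sub>M lborel)"
    unfolding F_def using wb by measurable
  have Fnn: "0 \<le> F u r" for u r using w0 by (simp add: F_def)
  have intw: "(\<lambda>r. c r * w r) integrable_on {x..y}" if "continuous_on UNIV c" for c x y
  proof -
    have cm: "c \<in> borel_measurable lebesgue"
      using that by (intro measurable_completion) (simp add: borel_measurable_continuous_onI)
    have "bounded (c ` {x..y})"
      by (intro compact_imp_bounded compact_continuous_image continuous_on_subset[OF that]) auto
    then obtain B where "\<forall>z\<in>c ` {x..y}. norm z \<le> B" by (auto simp: bounded_iff)
    then have B: "\<And>r. r \<in> {x..y} \<Longrightarrow> \<bar>c r\<bar> \<le> B" by auto
    show ?thesis
    proof (rule bm_int[where M="B*M"])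
      show "(\<lambda>r. c r * w r) \<in> borel_measurable lebesgue" using cm wl by measurable
      fix r assume r: "r \<in> {x..y}"
      have "\<bar>c r * w r\<bar> = \<bar>c r\<bar> * w r" using w0 by (simp add: abs_mult)
      also have "\<dots> \<le> B * M" using B[OF r] w0[of r] wM[of r]
        by (meson abs_ge_zero mult_mono order_trans)
      finally show "\<bar>c r * w r\<bar> \<le> B * M" .
    qed
  qed
  have Vcont: "continuous_on {a..s} V"
  proof -
    have "V u = exp (l*u) * integral {a..u} (\<lambda>r. exp (-l*r) * w r)" for u
    proof -
      have "V u = integral {a..u} (\<lambda>r. exp (l*u) * (exp (-l*r) * w r))"
        unfolding V_def by (rule integral_cong) (simp add: right_diff_distrib exp_diff exp_minus field_simps)
      also have "\<dots> = exp (l*u) * integral {a..u} (\<lambda>r. exp (-l*r) * w r)"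
        by simp
      finally show ?thesis .
    qed
    moreover have "continuous_on {a..s} (\<lambda>u. exp (l*u) * integral {a..u} (\<lambda>r. exp (-l*r) * w r))"
      by (intro continuous_intros indefinite_integral_continuous_1 intw)
    ultimately show ?thesis by (simp add: fun_eq_iff)
  qed
  have V0: "0 \<le> V u" for u
    unfolding V_def by (rule integral_nonneg) (auto intro!: intw continuous_intros simp: w0)
  have inner1: "(\<integral>\<^sup>+r. ennreal (F u r) \<partial>lborel) = ennreal (indicator {a..s} u * V u)" for u
  proof (cases "a \<le> u \<and> u \<le> s")
    case True
    have "(\<integral>\<^sup>+r. ennreal (F u r) \<partial>lborel) = (\<integral>\<^sup>+r. ennreal (indicator {a..u} r * (exp (l*(u-r)) * w r)) \<partial>lborel)"
      using True by (intro nn_integral_cong) (auto simp: F_def indicator_def)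
    also have "\<dots> = ennreal (V u)"
      unfolding V_def
      by (rule nn_integral_has_integral_lebesgue) (use w0 in \<open>auto intro!: integrable_integral intw continuous_intros\<close>)
    finally show ?thesis using True by simp
  next
    case False
    then have "\<And>r. F u r = 0" by (auto simp: F_def)
    then show ?thesis using False by (auto simp: indicator_def)
  qed
  have inner2: "(\<integral>\<^sup>+u. ennreal (F u r) \<partial>lborel) = ennreal (indicator {a..s} r * (w r * K r))" for r
  proof (cases "a \<le> r \<and> r \<le> s")
    case True
    have "(\<integral>\<^sup>+u. ennreal (F u r) \<partial>lborel) = (\<integral>\<^sup>+u. ennreal (indicator {r..s} u * (exp (l*(u-r)) * w r)) \<partial>lborel)"
      using True by (intro nn_integral_cong) (auto simp: F_def indicator_def)
    also have "\<dots> = ennreal (w r * K r)"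
    proof (rule nn_integral_has_integral_lebesgue)
      show "0 \<le> exp (l*(u-r)) * w r" for u using w0 by simp
      have "((\<lambda>u. exp (l*(u-r)) * w r) has_integral
              ((\<lambda>u. exp (l*(u-r)) / l * w r) s - (\<lambda>u. exp (l*(u-r)) / l * w r) r)) {r..s}"
        using True lam
        by (intro fundamental_theorem_of_calculus)
           (auto intro!: derivative_eq_intros simp: has_real_derivative_iff_has_vector_derivative[symmetric])
      then show "((\<lambda>u. exp (l*(u-r)) * w r) has_integral w r * K r) {r..s}"
        using lam by (simp add: K_def field_simps)
    qed
    finally show ?thesis using True by simp
  next
    case False
    then have "\<And>u. F u r = 0" by (auto simp: F_def)
    then show ?thesis using False by (auto simp: indicator_def)
  qed
  have K0: "r \<le> s \<Longrightarrow> 0 \<le> K r" for r using lam by (simp add: K_def)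
  have Vint: "V integrable_on {a..s}" using Vcont by (rule integrable_continuous_interval)
  have wKint: "(\<lambda>r. w r * K r) integrable_on {a..s}"
  proof -
    have "(\<lambda>r. K r * w r) integrable_on {a..s}"
      unfolding K_def by (rule intw) (intro continuous_intros, use lam in auto)
    then show ?thesis by (simp add: mult.commute)
  qed
  have "ennreal (integral {a..s} V) = (\<integral>\<^sup>+u. ennreal (indicator {a..s} u * V u) \<partial>lborel)"
    by (rule nn_integral_has_integral_lebesgue[symmetric])
       (use V0 Vcont in \<open>auto intro!: integrable_integral integrable_continuous_interval\<close>)
  also have "\<dots> = (\<integral>\<^sup>+u. (\<integral>\<^sup>+r. ennreal (F u r) \<partial>lborel) \<partial>lborel)"
    by (simp add: inner1)
  also have "\<dots> = (\<integral>\<^sup>+r. (\<integral>\<^sup>+u. ennreal (F u r) \<partial>lborel) \<partial>lborel)"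
    by (rule lborel_pair.Fubini'[OF meas, symmetric])
  also have "\<dots> = (\<integral>\<^sup>+r. ennreal (indicator {a..s} r * (w r * K r)) \<partial>lborel)"
    by (simp add: inner2)
  also have "\<dots> = ennreal (integral {a..s} (\<lambda>r. w r * K r))"
  proof (rule nn_integral_has_integral_lebesgue)
    show "r \<in> {a..s} \<Longrightarrow> 0 \<le> w r * K r" for r using w0 K0 by simp
    have "(\<lambda>r. K r * w r) integrable_on {a..s}"
      unfolding K_def by (rule intw) (intro continuous_intros, use lam in auto)
    then show "((\<lambda>r. w r * K r) has_integral integral {a..s} (\<lambda>r. w r * K r)) {a..s}"
      by (simp add: mult.commute integrable_integral)
  qed
  finally have "integral {a..s} V = integral {a..s} (\<lambda>r. w r * K r)"
    by (subst (asm) ennreal_inj) (auto intro!: integral_nonneg V0 Vint wKint simp: w0 K0)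
  then show ?thesis unfolding V_def K_def by simp
qed


lemma tonelli_ident_leb:
  fixes w :: "real \<Rightarrow> real"
  assumes wl: "w \<in> borel_measurable lebesgue" and w0: "\<And>x. 0 \<le> w x" and wM: "\<And>x. w x \<le> M"
    and lam: "l > 0" and as: "a \<le> s"
  shows "integral {a..s} (\<lambda>u. integral {a..u} (\<lambda>r. exp (l*(u-r)) * w r))
       = integral {a..s} (\<lambda>r. w r * ((exp (l*(s-r)) - 1) / l))"
proof -
  obtain w' where w'b: "w' \<in> borel_measurable lborel" and ae: "AE x in lborel. w x = w' x"
    using completion_ex_borel_measurable_real[OF wl] by blast
  define w2 where "w2 x = max 0 (min M (w' x))" for x
  have w2b: "w2 \<in> borel_measurable borel" using w'b unfolding w2_def by measurable
  have ae2: "AE x in lborel. w x = w2 x"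
    using ae
  proof eventually_elim
    fix x assume "w x = w' x"
    then show "w x = w2 x" using w0[of x] wM[of x] by (simp add: w2_def)
  qed
  have w20: "0 \<le> w2 x" for x by (simp add: w2_def)
  have w2M: "w2 x \<le> M" for x using w0[of x] wM[of x] by (simp add: w2_def)
  have eq1: "integral {a..u} (\<lambda>r. exp (l*(u-r)) * w r) = integral {a..u} (\<lambda>r. exp (l*(u-r)) * w2 r)" for u
    by (rule integral_AE_eq) (use ae2 in \<open>eventually_elim, simp\<close>)
  have eq2: "integral {a..s} (\<lambda>r. w r * ((exp (l*(s-r)) - 1) / l)) = integral {a..s} (\<lambda>r. w2 r * ((exp (l*(s-r)) - 1) / l))"
    by (rule integral_AE_eq) (use ae2 in \<open>eventually_elim, simp\<close>)
  show ?thesis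
    unfolding eq1 eq2 by (rule tonelli_ident[OF w2b w20 w2M lam as])
qed

lemma gronwall_hom:
  fixes D :: "real \<Rightarrow> real"
  assumes Dc: "continuous_on {a..b} D" and l: "l \<ge> 0"
    and H: "\<And>s. s \<in> {a..b} \<Longrightarrow> D s \<le> l * integral {a..s} D"
    and s: "s \<in> {a..b}"
  shows "D s \<le> 0"
proof -
  define P where "P x = exp (-l*x) * integral {a..x} D" for x
  have Icont: "continuous_on {a..b} (\<lambda>x. integral {a..x} D)"
    by (intro indefinite_integral_continuous_1 integrable_continuous_interval Dc)
  have "P s \<le> P a"
  proof (rule DERIV_nonpos_imp_decreasing_open[of a s P])
    show "a \<le> s" using s by simp
    show "continuous_on {a..s} P"
    proof -
      have "continuous_on {a..s} (\<lambda>x. integral {a..x} D)"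
        by (rule continuous_on_subset[OF Icont]) (use s in auto)
      then show ?thesis unfolding P_def by (intro continuous_intros)
    qed
    fix x assume x: "a < x" "x < s"
    have xi: "x \<in> interior {a..b}" using x s by auto
    have "((\<lambda>x. integral {a..x} D) has_real_derivative D x) (at x within {a..b})"
      by (rule integral_has_real_derivative[OF Dc]) (use x s in auto)
    then have d1: "((\<lambda>x. integral {a..x} D) has_real_derivative D x) (at x)"
      using at_within_interior[OF xi] by simp
    have "(P has_real_derivative (-l * exp (-l*x) * integral {a..x} D + exp (-l*x) * D x)) (at x)"
      unfolding P_def by (auto intro!: derivative_eq_intros d1)
    moreover have "-l * exp (-l*x) * integral {a..x} D + exp (-l*x) * D x \<le> 0"
    proof -
      have "D x \<le> l * integral {a..x} D" using H[of x] x s by auto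
      then have "exp (-l*x) * D x \<le> exp (-l*x) * (l * integral {a..x} D)"
        by (intro mult_left_mono) auto
      then show ?thesis by (simp add: algebra_simps)
    qed
    ultimately show "\<exists>y. (P has_real_derivative y) (at x) \<and> y \<le> 0" by blast
  qed
  then have "P s \<le> 0" by (simp add: P_def)
  then have "exp (- (l * s)) * integral {a..s} D \<le> 0" by (simp add: P_def)
  then have "integral {a..s} D \<le> 0" by (simp add: mult_le_0_iff)
  then show ?thesis using H[OF s] l by (smt (verit) mult_nonneg_nonpos)
qed


lemma holder_int:
  fixes f g :: "real \<Rightarrow> real"
  assumes p: "p > 1" and pq: "1/p + 1/q = 1"
    and f0: "\<And>x. x \<in> {a..b} \<Longrightarrow> 0 \<le> f x" and g0: "\<And>x. x \<in> {a..b} \<Longrightarrow> 0 \<le> g x"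
    and ifg: "(\<lambda>x. f x * g x) integrable_on {a..b}"
    and ifq: "(\<lambda>x. f x powr q) integrable_on {a..b}"
    and igp: "(\<lambda>x. g x powr p) integrable_on {a..b}"
    and Apos: "integral {a..b} (\<lambda>x. f x powr q) > 0"
  shows "(integral {a..b} (\<lambda>x. f x * g x)) powr p
         \<le> (integral {a..b} (\<lambda>x. f x powr q)) powr (p-1) * integral {a..b} (\<lambda>x. g x powr p)"
proof -
  define S where "S = integral {a..b} (\<lambda>x. f x * g x)"
  define A where "A = integral {a..b} (\<lambda>x. f x powr q)"
  define B where "B = integral {a..b} (\<lambda>x. g x powr p)"
  have qeq: "q = p / (p-1)"
  proof -
    have "1/q = 1 - 1/p" using pq by simp
    also have "\<dots> = (p-1)/p" using p by (simp add: field_simps)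
    finally have "1/q = (p-1)/p" .
    moreover have "q \<noteq> 0"
    proof
      assume "q = 0"
      with \<open>1/q = (p-1)/p\<close> p show False by simp
    qed
    ultimately show ?thesis using p by (simp add: field_simps)
  qed
  have q: "q > 1" using p unfolding qeq by (simp add: field_simps)
  have S0: "S \<ge> 0" unfolding S_def by (rule integral_nonneg[OF ifg]) (use f0 g0 in auto)
  have B0: "B \<ge> 0" unfolding B_def by (rule integral_nonneg[OF igp]) auto
  have A0: "A > 0" using Apos by (simp add: A_def)
  show ?thesis
  proof (cases "S = 0")
    case True
    then show ?thesis using p A0 B0 by (simp add: S_def[symmetric] A_def[symmetric] B_def[symmetric])
  next
    case False
    then have Sp: "S > 0" using S0 by simp
    define t where "t = (A/S) powr (1/q)"
    have tp: "t > 0" using A0 Sp by (simp add: t_def)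
    have tq: "t powr q = A/S" using A0 Sp q by (simp add: t_def powr_powr)
    have tpp: "t powr p = (A/S) powr (p-1)"
    proof -
      have "p/q = p - 1" unfolding qeq using p by (simp add: field_simps)
      then show ?thesis using A0 Sp by (simp add: t_def powr_powr)
    qed
    have pw: "f x * g x \<le> t powr p / p * g x powr p + 1 / (q * t powr q) * f x powr q"
      if x: "x \<in> {a..b}" for x
    proof -
      have "f x * g x = (t * g x) * (f x / t)" using tp by simp
      also have "\<dots> \<le> (t * g x) powr p / p + (f x / t) powr q / q"
        by (rule Youngs_inequality[OF p q pq]) (use tp f0[OF x] g0[OF x] in auto)
      also have "\<dots> = t powr p / p * g x powr p + 1 / (q * t powr q) * f x powr q"
        using tp f0[OF x] g0[OF x] by (simp add: powr_mult powr_divide)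
      finally show ?thesis .
    qed
    have "S \<le> integral {a..b} (\<lambda>x. t powr p / p * g x powr p + 1 / (q * t powr q) * f x powr q)"
    proof -
      have iR: "(\<lambda>x. t powr p / p * g x powr p + 1 / (q * t powr q) * f x powr q) integrable_on {a..b}"
        by (intro integrable_add integrable_on_mult_right igp ifq)
      show ?thesis unfolding S_def by (rule integral_le[OF ifg iR]) (use pw in auto)
    qed
    also have "\<dots> = t powr p / p * B + 1 / (q * t powr q) * A"
    proof -
      have i1: "(\<lambda>x. t powr p / p * g x powr p) integrable_on {a..b}" by (rule integrable_on_mult_right[OF igp])
      have i2: "(\<lambda>x. 1 / (q * t powr q) * f x powr q) integrable_on {a..b}" by (rule integrable_on_mult_right[OF ifq])
      show ?thesis unfolding A_def B_def integral_add[OF i1 i2] by simp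
    qed
    also have "\<dots> = (A/S) powr (p-1) / p * B + S / q"
      using A0 Sp by (simp add: tq tpp)
    finally have h1: "S \<le> (A/S) powr (p-1) / p * B + S / q" .
    have e1: "1/q = 1 - 1/p" using pq by simp
    have "S / q = S * (1/q)" by simp
    also have "\<dots> = S * (1 - 1/p)" using e1 by simp
    also have "\<dots> = S - S / p" by (simp add: right_diff_distrib)
    finally have e2: "S / q = S - S / p" .
    from h1 e2 have "S / p \<le> (A/S) powr (p-1) * B / p" by simp
    then have "S \<le> (A/S) powr (p-1) * B" using p by (simp add: divide_le_cancel)
    also have "\<dots> = A powr (p-1) * B / S powr (p-1)" using A0 Sp by (simp add: powr_divide)
    finally have h2: "S \<le> A powr (p-1) * B / S powr (p-1)" .
    have Spp: "S powr (p-1) > 0" using Sp by simp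
    have "S * S powr (p-1) \<le> A powr (p-1) * B"
      using h2 Spp by (simp add: le_divide_eq)
    moreover have "S powr p = S * S powr (p-1)"
    proof -
      have "S powr p = S powr ((p-1)+1)" by simp
      also have "\<dots> = S powr (p-1) * S powr 1" by (rule powr_add)
      finally show ?thesis using Sp by simp
    qed
    ultimately show ?thesis by (simp add: S_def A_def B_def)
  qed
qed


lemma cbm_int:
  fixes c h :: "real \<Rightarrow> real"
  assumes cc: "continuous_on UNIV c" and hm: "h \<in> borel_measurable lebesgue" and hM: "\<And>x. \<bar>h x\<bar> \<le> M"
  shows "(\<lambda>r. c r * h r) integrable_on {x..y}"
proof -
  have cm: "c \<in> borel_measurable lebesgue"
    using cc by (intro measurable_completion) (simp add: borel_measurable_continuous_onI)
  have "bounded (c ` {x..y})"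
    by (intro compact_imp_bounded compact_continuous_image continuous_on_subset[OF cc]) auto
  then obtain B where "\<forall>z\<in>c ` {x..y}. norm z \<le> B" by (auto simp: bounded_iff)
  then have B: "\<And>r. r \<in> {x..y} \<Longrightarrow> \<bar>c r\<bar> \<le> B" by auto
  show ?thesis
  proof (rule bm_int[where M="B*M"])
    show "(\<lambda>r. c r * h r) \<in> borel_measurable lebesgue" using cm hm by measurable
    fix r assume r: "r \<in> {x..y}"
    have "\<bar>c r * h r\<bar> = \<bar>c r\<bar> * \<bar>h r\<bar>" by (simp add: abs_mult)
    also have "\<dots> \<le> B * M" using B[OF r] hM[of r]
      by (meson abs_ge_zero mult_mono order_trans)
    finally show "\<bar>c r * h r\<bar> \<le> B * M" .
  qed
qed

lemma V_cont:
  fixes w :: "real \<Rightarrow> real"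
  assumes wl: "w \<in> borel_measurable lebesgue" and wM: "\<And>x. \<bar>w x\<bar> \<le> M"
  shows "continuous_on {a..b} (\<lambda>u. integral {a..u} (\<lambda>r. exp (l*(u-r)) * w r))"
proof -
  have "integral {a..u} (\<lambda>r. exp (l*(u-r)) * w r) = exp (l*u) * integral {a..u} (\<lambda>r. exp (-l*r) * w r)" for u
  proof -
    have "integral {a..u} (\<lambda>r. exp (l*(u-r)) * w r) = integral {a..u} (\<lambda>r. exp (l*u) * (exp (-l*r) * w r))"
      by (rule integral_cong) (simp add: right_diff_distrib exp_diff exp_minus field_simps)
    also have "\<dots> = exp (l*u) * integral {a..u} (\<lambda>r. exp (-l*r) * w r)"
      by simp
    finally show ?thesis .
  qed
  moreover have "continuous_on {a..b} (\<lambda>u. exp (l*u) * integral {a..u} (\<lambda>r. exp (-l*r) * w r))"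
    by (intro continuous_intros indefinite_integral_continuous_1 cbm_int[OF _ wl wM])
  ultimately show ?thesis by (simp add: fun_eq_iff)
qed

lemma exp_int:
  fixes c :: real
  assumes "c > 0" "a \<le> s"
  shows "((\<lambda>r. exp (c*(s-r))) has_integral (exp (c*(s-a)) - 1) / c) {a..s}"
proof -
  have "((\<lambda>r. exp (c*(s-r))) has_integral ((\<lambda>r. - exp (c*(s-r)) / c) s - (\<lambda>r. - exp (c*(s-r)) / c) a)) {a..s}"
    using assms
    by (intro fundamental_theorem_of_calculus)
       (auto intro!: derivative_eq_intros simp: has_real_derivative_iff_has_vector_derivative[symmetric])
  then show ?thesis using assms by (simp add: field_simps)
qed

lemma exp_int':
  fixes c :: real
  assumes "c > 0" "a \<le> s"
  shows "((\<lambda>r. exp (c*(r-a))) has_integral (exp (c*(s-a)) - 1) / c) {a..s}"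
proof -
  have "((\<lambda>r. exp (c*(r-a))) has_integral ((\<lambda>r. exp (c*(r-a)) / c) s - (\<lambda>r. exp (c*(r-a)) / c) a)) {a..s}"
    using assms
    by (intro fundamental_theorem_of_calculus)
       (auto intro!: derivative_eq_intros simp: has_real_derivative_iff_has_vector_derivative[symmetric])
  then show ?thesis using assms by (simp add: field_simps)
qed


lemma core:
  fixes e w :: "real \<Rightarrow> real"
  assumes ab: "a \<le> b" and l: "l > 0" and p: "p > 1" and pq: "1/p + 1/q = 1"
    and ec: "continuous_on {a..b} e" and e0: "\<And>s. s \<in> {a..b} \<Longrightarrow> 0 \<le> e s"
    and wl: "w \<in> borel_measurable lebesgue" and w0: "\<And>x. 0 \<le> w x" and wM: "\<And>x. w x \<le> M"
    and H: "\<And>s. s \<in> {a..b} \<Longrightarrow> e s \<le> integral {a..s} (\<lambda>r. w r + l * e r)"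
  shows "integral {a..b} (\<lambda>s. e s powr p)
    \<le> ((exp (l*p/(2*(p-1))*(b-a)) - 1) / (l*p/(2*(p-1)))) powr (p-1)
       * ((exp (l*p/2*(b-a)) - 1) / (l*p/2)) * integral {a..b} (\<lambda>s. w s powr p)"
proof -
  have wA: "\<bar>w x\<bar> \<le> M" for x using w0[of x] wM[of x] by simp
  have qeq: "q = p / (p-1)"
  proof -
    have "1/q = 1 - 1/p" using pq by simp
    also have "\<dots> = (p-1)/p" using p by (simp add: field_simps)
    finally have h: "1/q = (p-1)/p" .
    moreover have "q \<noteq> 0"
    proof
      assume "q = 0"
      with h p show False by simp
    qed
    ultimately show ?thesis using p by (simp add: field_simps)
  qed
  define V where "V s = integral {a..s} (\<lambda>r. exp (l*(s-r)) * w r)" for s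
  define Hw where "Hw = integral {a..b} (\<lambda>s. w s powr p)"
  define al where "al = l*p/(2*(p-1))"
  define be where "be = l*p/2"
  have alp: "al > 0" using l p by (simp add: al_def)
  have bep: "be > 0" using l p by (simp add: be_def)
  have wint: "w integrable_on {x..y}" for x y
    using cbm_int[of "\<lambda>_. 1" w M x y] wl wA by simp
  have wpm: "(\<lambda>x. w x powr p) \<in> borel_measurable lebesgue" using wl by measurable
  have wpA: "\<bar>w x powr p\<bar> \<le> M powr p" for x
    using w0[of x] wM[of x] p by (simp add: powr_mono2)
  have wpint: "(\<lambda>x. w x powr p) integrable_on {x..y}" for x y
    using cbm_int[of "\<lambda>_. 1" "\<lambda>x. w x powr p" "M powr p" x y] wpm wpA by simp
  have Hw0: "Hw \<ge> 0" unfolding Hw_def by (rule integral_nonneg[OF wpint]) auto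
  have eint: "e integrable_on {a..s}" if "s \<in> {a..b}" for s
    by (rule integrable_continuous_interval, rule continuous_on_subset[OF ec]) (use that in auto)
  have Vc: "continuous_on {a..b} V" unfolding V_def by (rule V_cont[OF wl wA])
  have Vint: "V integrable_on {a..s}" if "s \<in> {a..b}" for s
    by (rule integrable_continuous_interval, rule continuous_on_subset[OF Vc]) (use that in auto)
  have Vid: "V s = integral {a..s} w + l * integral {a..s} V" if s: "s \<in> {a..b}" for s
  proof -
    have i1: "(\<lambda>r. exp (l*(s-r)) * w r) integrable_on {a..s}"
      by (rule cbm_int[OF _ wl wA]) (intro continuous_intros)
    have "integral {a..s} V = integral {a..s} (\<lambda>r. w r * ((exp (l*(s-r)) - 1) / l))"
      unfolding V_def by (rule tonelli_ident_leb[OF wl w0 wM l]) (use s in auto)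
    then have "l * integral {a..s} V = integral {a..s} (\<lambda>r. l * (w r * ((exp (l*(s-r)) - 1) / l)))"
      by simp
    also have "\<dots> = integral {a..s} (\<lambda>r. exp (l*(s-r)) * w r - w r)"
      using l by (intro integral_cong) (simp add: field_simps)
    also have "\<dots> = V s - integral {a..s} w"
      unfolding V_def by (rule integral_diff[OF i1 wint])
    finally show ?thesis by simp
  qed
  have eV: "e s \<le> V s" if s: "s \<in> {a..b}" for s
  proof -
    have "e s - V s \<le> 0"
    proof (rule gronwall_hom[where D="\<lambda>s. e s - V s" and l=l and a=a and b=b])
      show "continuous_on {a..b} (\<lambda>s. e s - V s)" by (intro continuous_intros ec Vc)
      show "0 \<le> l" using l by simp
      show "s \<in> {a..b}" by (rule s)
      fix x assume x: "x \<in> {a..b}"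
      have "e x \<le> integral {a..x} w + l * integral {a..x} e"
        using H[OF x] integral_add[OF wint integrable_on_mult_right[OF eint[OF x]], of l]
        by simp
      moreover have "integral {a..x} (\<lambda>s. e s - V s) = integral {a..x} e - integral {a..x} V"
        by (rule integral_diff[OF eint[OF x] Vint[OF x]])
      ultimately show "e x - V x \<le> l * integral {a..x} (\<lambda>s. e s - V s)"
        using Vid[OF x] by (simp add: right_diff_distrib)
    qed
    then show ?thesis by simp
  qed
  define Ab where "Ab = (exp (al*(b-a)) - 1) / al"
  have Ab0: "Ab \<ge> 0" using alp ab by (simp add: Ab_def)
  have pb: "e s powr p \<le> Ab powr (p-1) * Hw * exp (be*(s-a))" if s: "s \<in> {a..b}" for s
  proof (cases "s = a")
    case True
    have "V a = 0" by (simp add: V_def)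
    then have "e s = 0" using eV[OF s] e0[OF s] True by simp
    then show ?thesis using Ab0 Hw0 by simp
  next
    case False
    then have sa: "a < s" using s by simp
    define f where "f r = exp (l*(s-r)/2)" for r
    define g where "g r = exp (l*(s-r)/2) * w r" for r
    have fg: "f r * g r = exp (l*(s-r)) * w r" for r
      by (simp add: f_def g_def mult.assoc[symmetric] exp_add[symmetric])
    have fq: "f r powr q = exp (al*(s-r))" for r
      using p unfolding f_def exp_powr_real al_def qeq by (simp add: field_simps)
    have gp: "g r powr p = exp (be*(s-r)) * w r powr p" for r
      using w0[of r] unfolding g_def be_def by (simp add: powr_mult exp_powr_real field_simps)
    have As: "integral {a..s} (\<lambda>r. f r powr q) = (exp (al*(s-a)) - 1) / al"
      unfolding fq using exp_int[OF alp, of a s] sa by (simp add: integral_unique)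
    have Apos: "integral {a..s} (\<lambda>r. f r powr q) > 0"
      unfolding As using alp sa by (simp add: divide_pos_pos)
    have hol: "(integral {a..s} (\<lambda>r. f r * g r)) powr p
         \<le> (integral {a..s} (\<lambda>r. f r powr q)) powr (p-1) * integral {a..s} (\<lambda>r. g r powr p)"
    proof (rule holder_int[OF p pq])
      show "0 \<le> f x" for x by (simp add: f_def)
      show "0 \<le> g x" for x using w0[of x] by (simp add: g_def)
      show "(\<lambda>x. f x * g x) integrable_on {a..s}"
        unfolding fg by (rule cbm_int[OF _ wl wA]) (intro continuous_intros)
      show "(\<lambda>x. f x powr q) integrable_on {a..s}"
        unfolding fq by (intro integrable_continuous_interval continuous_intros)
      show "(\<lambda>x. g x powr p) integrable_on {a..s}"
        unfolding gp by (rule cbm_int[OF _ wpm wpA]) (intro continuous_intros)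
    qed (rule Apos)
    have Bs: "integral {a..s} (\<lambda>r. g r powr p) \<le> exp (be*(s-a)) * Hw"
    proof -
      have "integral {a..s} (\<lambda>r. g r powr p) \<le> integral {a..s} (\<lambda>r. exp (be*(s-a)) * w r powr p)"
        unfolding gp
      proof (rule integral_le)
        show "(\<lambda>r. exp (be*(s-r)) * w r powr p) integrable_on {a..s}"
          by (rule cbm_int[OF _ wpm wpA]) (intro continuous_intros)
        show "(\<lambda>r. exp (be*(s-a)) * w r powr p) integrable_on {a..s}"
          by (rule cbm_int[OF _ wpm wpA]) (intro continuous_intros)
        fix r assume r: "r \<in> {a..s}"
        have "exp (be*(s-r)) \<le> exp (be*(s-a))" using r bep by (simp add: mult_left_mono)
        then show "exp (be*(s-r)) * w r powr p \<le> exp (be*(s-a)) * w r powr p"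
          by (rule mult_right_mono) simp
      qed
      also have "\<dots> = exp (be*(s-a)) * integral {a..s} (\<lambda>r. w r powr p)" by simp
      also have "\<dots> \<le> exp (be*(s-a)) * Hw"
        unfolding Hw_def
        by (intro mult_left_mono integral_subset_le wpint) (use s in auto)
      finally show ?thesis .
    qed
    have "e s powr p \<le> V s powr p"
      using eV[OF s] e0[OF s] p by (simp add: powr_mono2)
    also have "V s = integral {a..s} (\<lambda>r. f r * g r)" unfolding fg V_def ..
    also have "(integral {a..s} (\<lambda>r. f r * g r)) powr p
       \<le> (integral {a..s} (\<lambda>r. f r powr q)) powr (p-1) * integral {a..s} (\<lambda>r. g r powr p)"
      by (rule hol)
    also have "\<dots> \<le> Ab powr (p-1) * (exp (be*(s-a)) * Hw)"
    proof (rule mult_mono)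
      show "integral {a..s} (\<lambda>r. f r powr q) powr (p - 1) \<le> Ab powr (p - 1)"
      proof (rule powr_mono2)
        show "0 \<le> p - 1" using p by simp
        show "0 \<le> integral {a..s} (\<lambda>r. f r powr q)" using Apos by simp
        show "integral {a..s} (\<lambda>r. f r powr q) \<le> Ab"
          unfolding As Ab_def using s alp
          by (intro divide_right_mono) (auto simp: mult_left_mono)
      qed
      show "0 \<le> Ab powr (p - 1)" by simp
      show "0 \<le> integral {a..s} (\<lambda>r. g r powr p)"
        by (rule integral_nonneg) (auto intro!: cbm_int[OF _ wpm wpA] continuous_intros simp: gp)
    qed (rule Bs)
    finally show ?thesis by (simp add: mult_ac)
  qed
  have "integral {a..b} (\<lambda>s. e s powr p) \<le> integral {a..b} (\<lambda>s. Ab powr (p-1) * Hw * exp (be*(s-a)))"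
  proof (rule integral_le)
    show "(\<lambda>s. e s powr p) integrable_on {a..b}"
      using ec e0 p
      by (intro integrable_continuous_interval continuous_on_powr') auto
    show "(\<lambda>s. Ab powr (p-1) * Hw * exp (be*(s-a))) integrable_on {a..b}"
      by (intro integrable_continuous_interval continuous_intros)
  qed (rule pb)
  also have "\<dots> = Ab powr (p-1) * Hw * ((exp (be*(b-a)) - 1) / be)"
    using exp_int'[OF bep ab] by (simp add: integral_unique)
  finally show ?thesis by (simp add: Ab_def Hw_def al_def be_def mult_ac)
qed


lemma convex2:
  fixes x y p :: real
  assumes x: "0 \<le> x" and y: "0 \<le> y" and p: "1 \<le> p"
  shows "(x + y) powr p \<le> 2 powr (p-1) * (x powr p + y powr p)"
proof -
  have two: "1 \<le> 2 powr (p-1)" using p by (simp add: ge_one_powr_ge_zero)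
  consider "x = 0" | "y = 0" | "x > 0 \<and> y > 0" using x y by linarith
  then show ?thesis
  proof cases
    case 1
    have "y powr p \<le> 2 powr (p-1) * y powr p"
      using two by (simp add: mult_le_cancel_right1)
    then show ?thesis using 1 by simp
  next
    case 2
    have "x powr p \<le> 2 powr (p-1) * x powr p"
      using two by (simp add: mult_le_cancel_right1)
    then show ?thesis using 2 by simp
  next
    case 3
    have "((1/2) * x + (1/2) * y) powr p \<le> (1/2) * x powr p + (1/2) * y powr p"
      using convex_onD[OF powr_convex[OF p], of "1/2" x y] 3 by simp
    then have h: "((x + y)/2) powr p \<le> (x powr p + y powr p) / 2"
      by (simp add: field_simps)
    have e: "2 * ((x + y)/2) = x + y" by simp
    have "(x + y) powr p = (2 * ((x + y)/2)) powr p" by (simp only: e)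
    also have "\<dots> = 2 powr p * ((x + y)/2) powr p"
      using 3 by (subst powr_mult) auto
    also have "\<dots> \<le> 2 powr p * ((x powr p + y powr p) / 2)"
      by (rule mult_left_mono[OF h]) simp
    also have "\<dots> = (2 powr p / 2) * (x powr p + y powr p)" by simp
    also have "2 powr p / 2 = 2 powr (p-1)" by (simp add: powr_diff)
    finally show ?thesis .
  qed
qed

lemma aux_alg1:
  fixes a b c d e :: real
  shows "a / b * (c / d) * e = a * c * (e / (b * d))"
  by (simp add: field_simps)

lemma aux_alg2:
  fixes A2 L P Q l p :: real
  assumes "A2 > 0" "L > 0" "P > 0" "Q > 0" "l > 0" "p > 0"
  shows "A2 / (L * P / (A2 * Q) * (l * p / 2)) = A2 * A2 * 4 * Q / (L * l * (P * p)) / 2"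
  using assms by (simp add: field_simps)

lemma const_bound:
  fixes l p T tau :: real
  assumes l: "l > 0" and p: "p > 1" and T0: "0 \<le> T" and Tt: "T \<le> tau"
  shows "((exp (l*p/(2*(p-1))*T) - 1) / (l*p/(2*(p-1)))) powr (p-1)
       * ((exp (l*p/2*T) - 1) / (l*p/2)) * 2 powr (p-1) \<le> psi p l tau"
proof -
  define al where "al = l*p/(2*(p-1))"
  define be where "be = l*p/2"
  have alp: "al > 0" using l p by (simp add: al_def)
  have bep: "be > 0" using l p by (simp add: be_def)
  define X1 where "X1 = exp (al*T) - 1"
  define Y1 where "Y1 = exp (be*T) - 1"
  define X2 where "X2 = exp (al*tau) - 1"
  define Y2 where "Y2 = exp (be*tau) - 1"
  have X1: "0 \<le> X1" "X1 \<le> X2" using alp T0 Tt by (auto simp: X1_def X2_def mult_left_mono)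
  have Y1: "0 \<le> Y1" "Y1 \<le> Y2" using bep T0 Tt by (auto simp: Y1_def Y2_def mult_left_mono)
  define A2 where "A2 = 2 powr (p-1)"
  define L where "L = l powr (p-1)"
  define P where "P = p powr (p-1)"
  define Q where "Q = (p-1) powr (p-1)"
  have A2p: "A2 > 0" and Lp: "L > 0" and Pp: "P > 0" and Qp: "Q > 0"
    using l p by (auto simp: A2_def L_def P_def Q_def)
  have alpow: "al powr (p-1) = L * P / (A2 * Q)"
  proof -
    have e1: "(2*(p-1)) powr (p-1) = A2 * Q"
      unfolding A2_def Q_def using p by (subst powr_mult[symmetric]) auto
    have e2: "(l*p) powr (p-1) = L * P"
      unfolding L_def P_def using p l by (subst powr_mult[symmetric]) auto
    have "al powr (p-1) = (l*p) powr (p-1) / (2*(p-1)) powr (p-1)"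
      unfolding al_def using p l by (auto intro: powr_divide)
    then show ?thesis by (simp only: e1 e2)
  qed
  have lp: "l powr p = L * l"
  proof -
    have "l powr p = l powr ((p-1) + 1)" by simp
    also have "\<dots> = L * l" unfolding L_def using l by (simp only: powr_add) simp
    finally show ?thesis .
  qed
  have pp: "p powr p = P * p"
  proof -
    have "p powr p = p powr ((p-1) + 1)" by simp
    also have "\<dots> = P * p" unfolding P_def using p by (simp only: powr_add) simp
    finally show ?thesis .
  qed
  have tp: "2 powr (2*p) = A2 * A2 * 4"
  proof -
    have "(2::real) powr (2*p) = 2 powr ((p-1) + (p-1) + 2)" by (simp add: algebra_simps)
    also have "\<dots> = A2 * A2 * 4" unfolding A2_def by (simp only: powr_add) simp
    finally show ?thesis .
  qed
  define C where "C = 2 powr (2 * p) * (p - 1) powr (p - 1) / (l powr p * p powr p)"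
  have psi_eq: "psi p l tau = C * X2 powr (p-1) * Y2"
    unfolding psi_def C_def X2_def Y2_def al_def be_def by simp
  have Cp: "C \<ge> 0" unfolding C_def by simp
  have e3: "(X1 / al) powr (p-1) = X1 powr (p-1) / al powr (p-1)"
    by (rule powr_divide)
  have "(X1 / al) powr (p-1) * (Y1 / be) * A2 = X1 powr (p-1) * Y1 * (A2 / (al powr (p-1) * be))"
    unfolding e3 by (rule aux_alg1)
  also have "A2 / (al powr (p-1) * be) = C / 2"
    unfolding alpow C_def lp pp tp Q_def[symmetric] be_def
    by (rule aux_alg2) (use A2p Lp Pp Qp l p in auto)
  also have "X1 powr (p-1) * Y1 * (C/2) \<le> C * X2 powr (p-1) * Y2"
  proof -
    have n: "0 \<le> X1 powr (p-1) * Y1" using X1 Y1 by simp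
    have "X1 powr (p-1) \<le> X2 powr (p-1)" using X1 p by (intro powr_mono2) auto
    then have m: "X1 powr (p-1) * Y1 \<le> X2 powr (p-1) * Y2"
      using Y1 by (intro mult_mono) auto
    have "X1 powr (p-1) * Y1 * (C/2) \<le> X1 powr (p-1) * Y1 * C"
      using n Cp by (intro mult_left_mono) auto
    also have "\<dots> \<le> X2 powr (p-1) * Y2 * C"
      using m Cp by (rule mult_right_mono)
    finally show ?thesis by (simp only: mult_ac)
  qed
  finally have fin: "(X1 / al) powr (p-1) * (Y1 / be) * A2 \<le> C * X2 powr (p-1) * Y2" .
  then show ?thesis
    unfolding psi_eq X1_def Y1_def al_def be_def A2_def .
qed


theorem lemma5:
  fixes f :: "real^'n \<Rightarrow> real^'q \<Rightarrow> real^'n"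
    and g :: "real^'n \<Rightarrow> real^'m^'n"
    and gam :: "real^'n \<Rightarrow> real^'m"
    and d :: "real \<Rightarrow> real^'q"
    and xi :: "real \<Rightarrow> real^'n"
    and t :: "nat \<Rightarrow> real"
    and t0 p q lam1 lam2 lam3 c1 c2 c3 c3b mu sigma lam mud :: real
  defines "B1 \<equiv> c1 * sigma - (c3b * lam) powr q / q"
    and "B3 \<equiv> lam * (mud powr p - mu powr p) - c3"
    and "c \<equiv> c2 + lam2 powr p / p"
  defines "tauhat \<equiv> min (tau_of p lam2 lam1 B1 c) (tau_of p lam2 lam3 B3 c)"
  defines "a \<equiv> lam1 powr p * psi p lam2 tauhat"
    and "b \<equiv> lam3 powr p * psi p lam2 tauhat"
  assumes f_lip: "loc_lipschitz (\<lambda>z. f (fst z) (snd z))"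
    and g_lip: "loc_lipschitz g"
    and gam_lip: "loc_lipschitz gam"
    and f0: "f 0 0 = 0"
    and d_meas: "d measurable_on {t0..}"
    and d_Lp: "(\<lambda>s. norm (d s) powr p) integrable_on {t0..}"
    and d_bdd: "bounded (d ` {t0..})"
    and p_gt: "p > 1"
    and pq: "1 / p + 1 / q = 1"
    and t_mono: "strict_mono t"
    and t_0: "t 0 = t0"
    and xi_cont: "continuous_on {t0..} xi"
    and closed_loop: "\<forall>k. \<forall>s\<in>{t k..t (Suc k)}.
        ((\<lambda>r. f (xi r) (d r) + g (xi r) *v gam (xi (t k))) has_integral (xi s - xi (t k))) {t k..s}"
    and lam_pos: "lam1 > 0" "lam2 > 0" "lam3 > 0"
    and rate: "\<forall>k. \<forall>s\<in>{t k..t (Suc k)}.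
        norm (f (xi s) (d s) + g (xi s) *v gam (xi (t k)))
          \<le> lam1 * norm (xi s) + lam2 * norm (xi (t k) - xi s) + lam3 * norm (d s)"
    and consts_pos: "c1 > 0" "c2 > 0" "c3 > 0" "c3b > 0" "mu > 0" "lam > 0"
    and sigma_lt: "sigma < 1"
    and mud_gt: "mud > mu"
    and B_pos: "B1 > 0" "B3 > 0"
  shows "\<forall>k. integral {t k..min (t k + tauhat) (t (Suc k))} (\<lambda>s. norm (xi (t k) - xi s) powr p)
           \<le> a * integral {t k..min (t k + tauhat) (t (Suc k))} (\<lambda>s. norm (xi s) powr p)
             + b * integral {t k..min (t k + tauhat) (t (Suc k))} (\<lambda>s. norm (d s) powr p)"
proof (intro allI)
  fix k
  define lo where "lo = t k"
  define hi where "hi = min (t k + tauhat) (t (Suc k))"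
  have goal: "integral {lo..hi} (\<lambda>s. norm (xi lo - xi s) powr p)
           \<le> a * integral {lo..hi} (\<lambda>s. norm (xi s) powr p)
             + b * integral {lo..hi} (\<lambda>s. norm (d s) powr p)"
  proof (cases "lo \<le> hi")
    case False
    then show ?thesis by simp
  next
    case True
    note lohi = True
    have t0lo: "t0 \<le> lo" unfolding lo_def t_0[symmetric] using t_mono by (simp add: strict_mono_less_eq)
    have hik: "hi \<le> t (Suc k)" by (simp add: hi_def)
    have hitau: "hi \<le> lo + tauhat" by (simp add: hi_def lo_def)
    have sub: "{lo..hi} \<subseteq> {t0..}" using t0lo by auto
    have subk: "{lo..hi} \<subseteq> {t k..t (Suc k)}" using hik by (auto simp: lo_def)
    have tau0: "0 \<le> hi - lo" "hi - lo \<le> tauhat" using lohi hitau by auto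
    define e where "e s = norm (xi lo - xi s)" for s
    have xic: "continuous_on {lo..hi} xi" by (rule continuous_on_subset[OF xi_cont sub])
    have ec: "continuous_on {lo..hi} e" unfolding e_def by (intro continuous_intros xic)
    have e0: "0 \<le> e s" for s by (simp add: e_def)
    have "bounded (xi ` {lo..hi})"
      by (intro compact_imp_bounded compact_continuous_image xic) auto
    then obtain Mx where Mx': "\<forall>s\<in>{lo..hi}. norm (xi s) \<le> Mx"
      by (auto simp: bounded_iff)
    then have Mx: "\<And>s. s \<in> {lo..hi} \<Longrightarrow> norm (xi s) \<le> Mx" by blast
    obtain Md where Md': "\<forall>s\<in>{t0..}. norm (d s) \<le> Md"
      using d_bdd by (auto simp: bounded_iff)
    then have Md: "\<And>s. s \<in> {t0..} \<Longrightarrow> norm (d s) \<le> Md" by blast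
    have "norm (xi lo) \<le> Mx" using Mx lohi by auto
    then have Mx0: "0 \<le> Mx" by (meson norm_ge_zero order_trans)
    have "norm (d t0) \<le> Md" using Md by auto
    then have Md0: "0 \<le> Md" by (meson norm_ge_zero order_trans)
    define F where "F r = lam1 * norm (xi r) + lam3 * norm (d r)" for r
    define w where "w r = (if r \<in> {lo..hi} then F r else 0)" for r
    define M where "M = lam1 * Mx + lam3 * Md"
    have leb: "{lo..hi} \<in> sets lebesgue" by simp
    have xim: "xi \<in> borel_measurable (lebesgue_on {lo..hi})"
      by (rule continuous_imp_measurable_on_sets_lebesgue[OF xic leb])
    have dm0: "d \<in> borel_measurable (lebesgue_on {t0..})"
      by (rule measurable_on_imp_borel_measurable_lebesgue[OF d_meas]) simp
    have dm: "d \<in> borel_measurable (lebesgue_on {lo..hi})"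
      by (rule measurable_restrict_mono[OF dm0 sub])
    have Fm: "F \<in> borel_measurable (lebesgue_on {lo..hi})"
      unfolding F_def using xim dm by measurable
    have wl: "w \<in> borel_measurable lebesgue"
      unfolding w_def by (rule borel_measurable_if_I[OF Fm leb])
    have w0: "0 \<le> w x" for x using lam_pos by (simp add: w_def F_def)
    have wM: "w x \<le> M" for x
    proof (cases "x \<in> {lo..hi}")
      case True
      then have "x \<in> {t0..}" using sub by auto
      then have "lam1 * norm (xi x) + lam3 * norm (d x) \<le> lam1 * Mx + lam3 * Md"
        using Mx[OF True] Md lam_pos by (intro add_mono mult_left_mono) auto
      then show ?thesis using True by (simp add: w_def F_def M_def)
    next
      case False
      then show ?thesis using Mx0 Md0 lam_pos by (auto simp: w_def M_def)
    qed
    have wA: "\<bar>w x\<bar> \<le> M" for x using w0[of x] wM[of x] by simp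
    have wint: "w integrable_on {x..y}" for x y
      by (rule bm_int[OF wl wA])
    have H: "e s \<le> integral {lo..s} (\<lambda>r. w r + lam2 * e r)" if s: "s \<in> {lo..hi}" for s
    proof -
      have sk: "s \<in> {t k..t (Suc k)}" using s subk by auto
      define Fk where "Fk r = f (xi r) (d r) + g (xi r) *v gam (xi lo)" for r
      have hi1: "(Fk has_integral (xi s - xi lo)) {lo..s}"
        using closed_loop sk unfolding Fk_def lo_def by blast
      have bint: "(\<lambda>r. w r + lam2 * e r) integrable_on {lo..s}"
      proof (rule integrable_add[OF wint])
        have "continuous_on {lo..s} e" by (rule continuous_on_subset[OF ec]) (use s in auto)
        then show "(\<lambda>r. lam2 * e r) integrable_on {lo..s}"
          by (intro integrable_continuous_interval continuous_intros)
      qed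
      have "norm (integral {lo..s} Fk) \<le> integral {lo..s} (\<lambda>r. w r + lam2 * e r)"
      proof (rule integral_norm_bound_integral[OF has_integral_integrable[OF hi1] bint])
        fix r assume r: "r \<in> {lo..s}"
        then have rk: "r \<in> {t k..t (Suc k)}" and rl: "r \<in> {lo..hi}" using s subk by auto
        have "norm (Fk r) \<le> lam1 * norm (xi r) + lam2 * norm (xi (t k) - xi r) + lam3 * norm (d r)"
          using rate rk unfolding Fk_def lo_def by blast
        then show "norm (Fk r) \<le> w r + lam2 * e r"
          using rl by (simp add: w_def F_def e_def lo_def)
      qed
      then show ?thesis
        using integral_unique[OF hi1] by (simp add: e_def norm_minus_commute)
    qed
    have I1: "integral {lo..hi} (\<lambda>s. e s powr p)
      \<le> ((exp (lam2*p/(2*(p-1))*(hi-lo)) - 1) / (lam2*p/(2*(p-1)))) powr (p-1)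
         * ((exp (lam2*p/2*(hi-lo)) - 1) / (lam2*p/2)) * integral {lo..hi} (\<lambda>s. w s powr p)"
      by (rule core[OF lohi lam_pos(2) p_gt pq ec e0 wl w0 wM H])
    define Kc where "Kc = ((exp (lam2*p/(2*(p-1))*(hi-lo)) - 1) / (lam2*p/(2*(p-1)))) powr (p-1)
         * ((exp (lam2*p/2*(hi-lo)) - 1) / (lam2*p/2))"
    have Kc0: "0 \<le> Kc" unfolding Kc_def using lam_pos p_gt tau0 by (intro mult_nonneg_nonneg divide_nonneg_pos) auto
    have Kcb: "Kc * 2 powr (p-1) \<le> psi p lam2 tauhat"
      unfolding Kc_def by (rule const_bound[OF lam_pos(2) p_gt tau0])
    define X where "X = integral {lo..hi} (\<lambda>s. norm (xi s) powr p)"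
    define Dd where "Dd = integral {lo..hi} (\<lambda>s. norm (d s) powr p)"
    have xpc: "continuous_on {lo..hi} (\<lambda>s. norm (xi s) powr p)"
      by (rule continuous_on_powr') (use p_gt in \<open>auto intro!: continuous_intros xic\<close>)
    have xpint: "(\<lambda>s. norm (xi s) powr p) integrable_on {lo..hi}"
      by (rule integrable_continuous_interval[OF xpc])
    have dpint: "(\<lambda>s. norm (d s) powr p) integrable_on {lo..hi}"
    proof (rule measurable_bounded_by_integrable_imp_integrable_real[where g="\<lambda>_. Md powr p"])
      show "(\<lambda>s. norm (d s) powr p) \<in> borel_measurable (lebesgue_on {lo..hi})"
        using dm by measurable
      show "(\<lambda>_. Md powr p) integrable_on {lo..hi}" by (rule integrable_const_ivl)
      fix s assume "s \<in> {lo..hi}"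
      then have "norm (d s) \<le> Md" using Md sub by auto
      then show "\<bar>norm (d s) powr p\<bar> \<le> Md powr p" using p_gt by (simp add: powr_mono2)
    qed (rule leb)
    have X0: "0 \<le> X" unfolding X_def by (rule integral_nonneg[OF xpint]) auto
    have D0: "0 \<le> Dd" unfolding Dd_def by (rule integral_nonneg[OF dpint]) auto
    have wpint: "(\<lambda>s. w s powr p) integrable_on {lo..hi}"
    proof (rule bm_int[where M="M powr p"])
      show "(\<lambda>s. w s powr p) \<in> borel_measurable lebesgue" using wl by measurable
      show "\<bar>w x powr p\<bar> \<le> M powr p" for x using w0[of x] wM[of x] p_gt by (simp add: powr_mono2)
    qed
    have I2: "integral {lo..hi} (\<lambda>s. w s powr p) \<le> 2 powr (p-1) * (lam1 powr p * X + lam3 powr p * Dd)"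
    proof -
      have rint: "(\<lambda>s. 2 powr (p-1) * (lam1 powr p * norm (xi s) powr p + lam3 powr p * norm (d s) powr p)) integrable_on {lo..hi}"
        by (intro integrable_on_mult_right integrable_add xpint dpint)
      have "integral {lo..hi} (\<lambda>s. w s powr p)
          \<le> integral {lo..hi} (\<lambda>s. 2 powr (p-1) * (lam1 powr p * norm (xi s) powr p + lam3 powr p * norm (d s) powr p))"
      proof (rule integral_le[OF wpint rint])
        fix s assume s: "s \<in> {lo..hi}"
        have "w s powr p = (lam1 * norm (xi s) + lam3 * norm (d s)) powr p"
          using s by (simp add: w_def F_def)
        also have "\<dots> \<le> 2 powr (p-1) * ((lam1 * norm (xi s)) powr p + (lam3 * norm (d s)) powr p)"
          by (rule convex2) (use lam_pos p_gt in auto)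
        also have "\<dots> = 2 powr (p-1) * (lam1 powr p * norm (xi s) powr p + lam3 powr p * norm (d s) powr p)"
          using lam_pos by (simp add: powr_mult)
        finally show "w s powr p \<le> 2 powr (p-1) * (lam1 powr p * norm (xi s) powr p + lam3 powr p * norm (d s) powr p)" .
      qed
      also have "\<dots> = 2 powr (p-1) * (lam1 powr p * X + lam3 powr p * Dd)"
        unfolding X_def Dd_def
        by (simp add: integral_add[OF integrable_on_mult_right[OF xpint] integrable_on_mult_right[OF dpint]])
      finally show ?thesis .
    qed
    have S0: "0 \<le> lam1 powr p * X + lam3 powr p * Dd" using X0 D0 by simp
    have "integral {lo..hi} (\<lambda>s. e s powr p) \<le> Kc * integral {lo..hi} (\<lambda>s. w s powr p)"
      using I1 by (simp add: Kc_def)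
    also have "\<dots> \<le> Kc * (2 powr (p-1) * (lam1 powr p * X + lam3 powr p * Dd))"
      by (rule mult_left_mono[OF I2 Kc0])
    also have "\<dots> = (Kc * 2 powr (p-1)) * (lam1 powr p * X + lam3 powr p * Dd)" by simp
    also have "\<dots> \<le> psi p lam2 tauhat * (lam1 powr p * X + lam3 powr p * Dd)"
      by (rule mult_right_mono[OF Kcb S0])
    also have "\<dots> = a * X + b * Dd" by (simp add: a_def b_def algebra_simps)
    finally show ?thesis by (simp add: e_def X_def Dd_def)
  qed
  then show "integral {t k..min (t k + tauhat) (t (Suc k))} (\<lambda>s. norm (xi (t k) - xi s) powr p)
           \<le> a * integral {t k..min (t k + tauhat) (t (Suc k))} (\<lambda>s. norm (xi s) powr p)
             + b * integral {t k..min (t k + tauhat) (t (Suc k))} (\<lambda>s. norm (d s) powr p)"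
    by (simp add: lo_def hi_def)
qed

end
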